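(* Let $\boldsymbol{H}$ be a self-adjoint operator on $L^{2}(\mathbb{Z}_{p})$ defined on $\mathcal{D}(\mathbb{Z}_{p})$, with unitary group $e^{-i\boldsymbol{H}t}$. Let $\mathcal{N}\subset\mathbb{Z}_{p}$ have measure zero and $\{\mathcal{K}_{j}\}_{j\in\mathbb{J}}$ be pairwise disjoint open compact subsets with $\mathbb{Z}_{p}\smallsetminus\mathcal{N}=\bigsqcup_{j\in\mathbb{J}}\mathcal{K}_{j}$, where $\mathbb{J}$ is a finite set. Put $e_{v}=c_{v}1_{\mathcal{K}_{v}}$ with $\|e_v\|_2=1$, and assume $\mathcal{H}_{\mathbb{J}}:=\mathrm{Span}\{e_j;\ j\in\mathbb{J}\}$ is a Hilbert subspace of $L^2(\mathbb{Z}_p)$. For $r,v\in\mathbb{J}$ set $\pi_{r,v}(t)=|\langle e_{r},e^{-i\boldsymbol{H}t}e_{v}\rangle|^{2}$; introduce an extra state $\infty$ and set $\pi_{\infty,v}(t)=1-\sum_{r\in\mathbb{J}}\pi_{r,v}(t)$ for $v\in\mathbb{J}$, $\pi_{s,\infty}(t)=0$ for $s\in\mathbb{J}$ and $\pi_{\infty,\infty}(t)=1$, for all $t\ge0$. Then $[\pi_{s,r}(t)]_{s,r\in\mathbb{J}\cup\{\infty\}}$ is the transition matrix of a continuous-time quantum Markov chain with state space $\mathbb{J}\cup\{\infty\}$.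
   Context: $p$ is a fixed prime; $\mathbb{Z}_p$ carries the Haar measure with $\int_{\mathbb{Z}_p}dx=1$; $\langle f,g\rangle=\int f\overline g\,dx$. By the transition matrix of a continuous-time quantum Markov chain on a state space $S$ the paper means a family $[\pi_{s,r}(t)]_{s,r\in S}$, $t\ge0$, with $\pi_{s,r}(t)\in[0,1]$ and $\sum_{s\in S}\pi_{s,r}(t)=1$ for all $r\in S$, $t\ge 0$, interpreted as the probability of being in state $s$ at time $t$ having started in $r$. *)

theory Defs
  imports "HOL-Probability.Probability"
begin

text \<open>The p-adic integers are modelled through their digit expansions
  x = x 0 + x 1 * p + x 2 * p^2 + ..., i.e. as the set of digit sequences
  nat \<Rightarrow> nat with all digits below p.  Under this (homeomorphic, measure
  preserving) identification the topology of Z_p is the product of discrete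
  topologies on {0..<p}, and the normalised Haar measure is the infinite
  product of uniform probability measures on {0..<p}.\<close>

type_synonym padic = "nat \<Rightarrow> nat"

definition Zp :: "nat \<Rightarrow> padic set" where
  "Zp p = PiE UNIV (\<lambda>_. {..<p})"

definition Zp_top :: "nat \<Rightarrow> padic topology" where
  "Zp_top p = product_topology (\<lambda>_. discrete_topology {..<p}) UNIV"

definition haar :: "nat \<Rightarrow> padic measure" where
  "haar p = PiM UNIV (\<lambda>_. uniform_count_measure {..<p})"

definition L2 :: "nat \<Rightarrow> (padic \<Rightarrow> complex) set" where
  "L2 p = {f. f \<in> borel_measurable (haar p) \<and> integrable (haar p) (\<lambda>x. (cmod (f x))\<^sup>2)}"

definition l2_inner :: "nat \<Rightarrow> (padic \<Rightarrow> complex) \<Rightarrow> (padic \<Rightarrow> complex) \<Rightarrow> complex" where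
  "l2_inner p f g = (LINT x|haar p. f x * cnj (g x))"

definition l2_norm :: "nat \<Rightarrow> (padic \<Rightarrow> complex) \<Rightarrow> real" where
  "l2_norm p f = sqrt (LINT x|haar p. (cmod (f x))\<^sup>2)"

text \<open>Test functions D(Z_p): locally constant functions on Z_p (Z_p is compact,
  so the support condition is automatic); locally constant means depending only
  on finitely many digits.\<close>
definition test_functions :: "nat \<Rightarrow> (padic \<Rightarrow> complex) set" where
  "test_functions p = {\<phi>. \<exists>n. \<forall>x\<in>Zp p. \<forall>y\<in>Zp p. (\<forall>i<n. x i = y i) \<longrightarrow> \<phi> x = \<phi> y}"

definition unitary_L2 :: "nat \<Rightarrow> ((padic \<Rightarrow> complex) \<Rightarrow> (padic \<Rightarrow> complex)) \<Rightarrow> bool" where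
  "unitary_L2 p V \<longleftrightarrow>
     (\<forall>f\<in>L2 p. V f \<in> L2 p) \<and>
     (\<forall>f\<in>L2 p. \<forall>g\<in>L2 p. \<forall>a b. AE x in haar p. V (\<lambda>y. a * f y + b * g y) x = a * V f x + b * V g x) \<and>
     (\<forall>f\<in>L2 p. \<forall>g\<in>L2 p. l2_inner p (V f) (V g) = l2_inner p f g) \<and>
     (\<forall>g\<in>L2 p. \<exists>f\<in>L2 p. AE x in haar p. V f x = g x)"

text \<open>U is the unitary group e^{-iHt} of the (self-adjoint) operator H defined on
  D(Z_p): a strongly continuous one-parameter unitary group whose generator
  -iH acts on every test function as -i H.\<close>
definition unitary_group_of :: "nat \<Rightarrow> ((padic \<Rightarrow> complex) \<Rightarrow> (padic \<Rightarrow> complex))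
     \<Rightarrow> (real \<Rightarrow> (padic \<Rightarrow> complex) \<Rightarrow> (padic \<Rightarrow> complex)) \<Rightarrow> bool" where
  "unitary_group_of p H U \<longleftrightarrow>
     (\<forall>t. unitary_L2 p (U t)) \<and>
     (\<forall>f\<in>L2 p. AE x in haar p. U 0 f x = f x) \<and>
     (\<forall>s t. \<forall>f\<in>L2 p. AE x in haar p. U (s + t) f x = U s (U t f) x) \<and>
     (\<forall>f\<in>L2 p. \<forall>t0. ((\<lambda>t. l2_norm p (\<lambda>x. U t f x - U t0 f x)) \<longlongrightarrow> 0) (at t0)) \<and>
     (\<forall>\<phi>\<in>test_functions p. H \<phi> \<in> L2 p \<and>
        ((\<lambda>t. l2_norm p (\<lambda>x. (U t \<phi> x - \<phi> x) / complex_of_real t + \<i> * H \<phi> x)) \<longlongrightarrow> 0) (at 0)) \<and>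
     (\<forall>\<phi>\<in>test_functions p. \<forall>\<psi>\<in>test_functions p. l2_inner p (H \<phi>) \<psi> = l2_inner p \<phi> (H \<psi>))"

definition qmc_transition_matrix :: "'s set \<Rightarrow> (real \<Rightarrow> 's \<Rightarrow> 's \<Rightarrow> real) \<Rightarrow> bool" where
  "qmc_transition_matrix S \<pi> \<longleftrightarrow>
     (\<forall>t\<ge>0. \<forall>s\<in>S. \<forall>r\<in>S. 0 \<le> \<pi> t s r \<and> \<pi> t s r \<le> 1) \<and>
     (\<forall>t\<ge>0. \<forall>r\<in>S. (\<Sum>s\<in>S. \<pi> t s r) = 1)"

text \<open>The matrix pi of the theorem; the extra state \<infinity> is None, state j is Some j.\<close>
definition pi_mat :: "nat \<Rightarrow> (real \<Rightarrow> (padic \<Rightarrow> complex) \<Rightarrow> (padic \<Rightarrow> complex))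
     \<Rightarrow> ('j \<Rightarrow> padic \<Rightarrow> complex) \<Rightarrow> 'j set \<Rightarrow> real \<Rightarrow> 'j option \<Rightarrow> 'j option \<Rightarrow> real" where
  "pi_mat p U e J t s r =
     (case r of
        Some v \<Rightarrow> (case s of
            Some r' \<Rightarrow> (cmod (l2_inner p (e r') (U t (e v))))\<^sup>2
          | None \<Rightarrow> 1 - (\<Sum>r'\<in>J. (cmod (l2_inner p (e r') (U t (e v))))\<^sup>2))
      | None \<Rightarrow> (case s of Some _ \<Rightarrow> 0 | None \<Rightarrow> 1))"

end

theory Submission
  imports Defs
begin

lemma cs_real:
  fixes f g :: "'a \<Rightarrow> real"
  assumes [measurable]: "f \<in> borel_measurable M" "g \<in> borel_measurable M"
    and f0: "\<And>x. f x \<ge> 0" and g0: "\<And>x. g x \<ge> 0"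
    and fi: "integrable M (\<lambda>x. f x ^ 2)" and gi: "integrable M (\<lambda>x. g x ^ 2)"
  shows "(LINT x|M. f x * g x)\<^sup>2 \<le> (LINT x|M. f x ^ 2) * (LINT x|M. g x ^ 2)"
proof -
  have int: "integrable M (\<lambda>x. f x * g x)"
  proof (rule Bochner_Integration.integrable_bound[of _ "\<lambda>x. f x ^ 2 + g x ^ 2"])
    show "integrable M (\<lambda>x. f x ^ 2 + g x ^ 2)" using fi gi by auto
    show "(\<lambda>x. f x * g x) \<in> borel_measurable M" by measurable
    show "AE x in M. norm (f x * g x) \<le> norm (f x ^ 2 + g x ^ 2)"
    proof (rule AE_I2)
      fix x
      have "0 \<le> (f x - g x)^2" by simp
      then have a: "2 * (f x * g x) \<le> f x ^ 2 + g x ^ 2" by (simp add: power2_eq_square algebra_simps)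
      have b: "0 \<le> f x * g x" using f0[of x] g0[of x] by simp
      have "f x * g x \<le> f x ^ 2 + g x ^ 2" using a b by linarith
      then show "norm (f x * g x) \<le> norm (f x ^ 2 + g x ^ 2)"
        using b by simp
    qed
  qed
  have e1: "(\<integral>\<^sup>+x. ennreal (f x * g x) \<partial>M) = ennreal (LINT x|M. f x * g x)"
    by (rule nn_integral_eq_integral[OF int]) (simp add: f0 g0)
  have e2: "(\<integral>\<^sup>+x. ennreal (f x ^ 2) \<partial>M) = ennreal (LINT x|M. f x ^ 2)"
    by (rule nn_integral_eq_integral[OF fi]) simp
  have e3: "(\<integral>\<^sup>+x. ennreal (g x ^ 2) \<partial>M) = ennreal (LINT x|M. g x ^ 2)"
    by (rule nn_integral_eq_integral[OF gi]) simp
  have cs: "(\<integral>\<^sup>+x. ennreal (f x) * ennreal (g x) \<partial>M)\<^sup>2 \<le> (\<integral>\<^sup>+x. ennreal (f x) ^ 2 \<partial>M) * (\<integral>\<^sup>+x. ennreal (g x) ^ 2 \<partial>M)"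
    by (rule Cauchy_Schwarz_nn_integral) auto
  have c1: "(\<integral>\<^sup>+x. ennreal (f x) * ennreal (g x) \<partial>M) = (\<integral>\<^sup>+x. ennreal (f x * g x) \<partial>M)"
    by (rule nn_integral_cong) (rule ennreal_mult[symmetric, OF f0 g0])
  have c2: "(\<integral>\<^sup>+x. ennreal (f x) ^ 2 \<partial>M) = (\<integral>\<^sup>+x. ennreal (f x ^ 2) \<partial>M)"
    by (rule nn_integral_cong) (rule ennreal_power[OF f0])
  have c3: "(\<integral>\<^sup>+x. ennreal (g x) ^ 2 \<partial>M) = (\<integral>\<^sup>+x. ennreal (g x ^ 2) \<partial>M)"
    by (rule nn_integral_cong) (rule ennreal_power[OF g0])
  have p1: "0 \<le> (LINT x|M. f x * g x)" by (intro integral_nonneg_AE) (simp add: f0 g0)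
  have p2: "0 \<le> (LINT x|M. f x ^ 2)" "0 \<le> (LINT x|M. g x ^ 2)" by (intro integral_nonneg_AE; simp)+
  have "ennreal (LINT x|M. f x * g x) ^ 2 \<le> ennreal (LINT x|M. f x ^ 2) * ennreal (LINT x|M. g x ^ 2)"
    using cs unfolding c1 c2 c3 e1 e2 e3 .
  then have "ennreal ((LINT x|M. f x * g x)\<^sup>2) \<le> ennreal ((LINT x|M. f x ^ 2) * (LINT x|M. g x ^ 2))"
    by (simp only: ennreal_power[OF p1] ennreal_mult[OF p2])
  moreover have "0 \<le> (LINT x|M. f x ^ 2) * (LINT x|M. g x ^ 2)"
    by (intro mult_nonneg_nonneg integral_nonneg_AE) auto
  ultimately show ?thesis by (simp add: ennreal_le_iff)
qed


lemma inner_self_cmod: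
  "(LINT x|M. f x * cnj (f x)) = complex_of_real (LINT x|M. (cmod (f x))\<^sup>2)"
proof -
  have "(\<lambda>x. f x * cnj (f x)) = (\<lambda>x. complex_of_real ((cmod (f x))\<^sup>2))"
    by (rule ext) (metis complex_norm_square of_real_power)
  then show ?thesis by (simp only: integral_complex_of_real)
qed

lemma ind_set:
  fixes c :: complex
  assumes "(LINT x|M. (cmod (c * indicator K x))\<^sup>2) = 1"
  shows "K \<inter> space M \<in> sets M" "c \<noteq> 0"
    "integrable M (\<lambda>x. (cmod (c * indicator K x))\<^sup>2)"
proof -
  have eq: "(\<lambda>x. (cmod (c * indicator K x))\<^sup>2) = (\<lambda>x. (cmod c)\<^sup>2 * indicator K x)"
    by (rule ext) (simp add: indicator_def norm_mult power_mult_distrib)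
  show i: "integrable M (\<lambda>x. (cmod (c * indicator K x))\<^sup>2)"
    using assms not_integrable_integral_eq by fastforce
  show c: "c \<noteq> 0" using assms by (cases "c = 0") auto
  have "integrable M (\<lambda>x. (cmod c)\<^sup>2 * (indicator K x :: real))" using i eq by simp
  then have "integrable M (indicator K :: _ \<Rightarrow> real)" using c by simp
  then show "K \<inter> space M \<in> sets M" by (simp add: integrable_indicator_iff)
qed

lemma bessel:
  fixes M :: "'a measure" and e :: "'j \<Rightarrow> 'a \<Rightarrow> complex" and G :: "'a \<Rightarrow> complex"
  assumes fin: "finite J" and dj: "disjoint_family_on K J"
    and ed: "\<And>r. e r = (\<lambda>x. c r * indicator (K r) x)"
    and en: "\<And>r. r \<in> J \<Longrightarrow> (LINT x|M. (cmod (e r x))\<^sup>2) = 1"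
    and Gm[measurable]: "G \<in> borel_measurable M"
    and Gi: "integrable M (\<lambda>x. (cmod (G x))\<^sup>2)"
  shows "(\<Sum>r\<in>J. (cmod (LINT x|M. e r x * cnj (G x)))\<^sup>2) \<le> (LINT x|M. (cmod (G x))\<^sup>2)"
proof -
  have step: "(cmod (LINT x|M. e r x * cnj (G x)))\<^sup>2 \<le> (LINT x|M. indicator (K r) x * (cmod (G x))\<^sup>2)"
    if r: "r \<in> J" for r
  proof -
    have n1: "(LINT x|M. (cmod (c r * indicator (K r) x))\<^sup>2) = 1" using en[OF r] ed by simp
    note I = ind_set[OF n1]
    have Km[measurable]: "K r \<inter> space M \<in> sets M" by (rule I(1))
    have ind_m[measurable]: "(indicator (K r) :: 'a \<Rightarrow> real) \<in> borel_measurable M"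
      using Km by (simp add: borel_measurable_indicator_iff)
    define f where "f x = cmod (c r) * indicator (K r) x" for x
    define g where "g x = indicator (K r) x * cmod (G x)" for x
    have fm: "f \<in> borel_measurable M" unfolding f_def by measurable
    have gm: "g \<in> borel_measurable M" unfolding g_def by measurable
    have f2: "(\<lambda>x. f x ^ 2) = (\<lambda>x. (cmod (c r * indicator (K r) x))\<^sup>2)"
      by (rule ext) (simp add: f_def indicator_def norm_mult)
    have g2: "(\<lambda>x. g x ^ 2) = (\<lambda>x. indicator (K r) x * (cmod (G x))\<^sup>2)"
      by (rule ext) (simp add: g_def indicator_def)
    have gi: "integrable M (\<lambda>x. indicator (K r) x * (cmod (G x))\<^sup>2)"
    proof (rule Bochner_Integration.integrable_bound[OF Gi])
      show "(\<lambda>x. indicator (K r) x * (cmod (G x))\<^sup>2) \<in> borel_measurable M" by measurable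
      show "AE x in M. norm (indicator (K r) x * (cmod (G x))\<^sup>2) \<le> norm ((cmod (G x))\<^sup>2)"
        by (rule AE_I2) (simp add: indicator_def)
    qed
    have cs: "(LINT x|M. f x * g x)\<^sup>2 \<le> (LINT x|M. f x ^ 2) * (LINT x|M. g x ^ 2)"
    proof (rule cs_real[OF fm gm])
      show "integrable M (\<lambda>x. f x ^ 2)" unfolding f2 by (rule I(3))
      show "integrable M (\<lambda>x. g x ^ 2)" unfolding g2 by (rule gi)
    qed (auto simp: f_def g_def)
    have fg: "(\<lambda>x. f x * g x) = (\<lambda>x. norm (e r x * cnj (G x)))"
      by (rule ext) (simp add: f_def g_def ed indicator_def norm_mult)
    have b: "cmod (LINT x|M. e r x * cnj (G x)) \<le> (LINT x|M. f x * g x)"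
      unfolding fg by (rule integral_norm_bound)
    have "(cmod (LINT x|M. e r x * cnj (G x)))\<^sup>2 \<le> (LINT x|M. f x * g x)\<^sup>2"
      using b by (intro power_mono) auto
    also have "\<dots> \<le> (LINT x|M. f x ^ 2) * (LINT x|M. g x ^ 2)" by (rule cs)
    also have "\<dots> = (LINT x|M. indicator (K r) x * (cmod (G x))\<^sup>2)"
      unfolding f2 g2 n1 by simp
    finally show ?thesis .
  qed
  have ints: "integrable M (\<lambda>x. indicator (K r) x * (cmod (G x))\<^sup>2)" if r: "r \<in> J" for r
  proof -
    have n1: "(LINT x|M. (cmod (c r * indicator (K r) x))\<^sup>2) = 1" using en[OF r] ed by simp
    note I = ind_set[OF n1]
    have Km[measurable]: "K r \<inter> space M \<in> sets M" by (rule I(1))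
    have ind_m[measurable]: "(indicator (K r) :: 'a \<Rightarrow> real) \<in> borel_measurable M"
      using Km by (simp add: borel_measurable_indicator_iff)
    show ?thesis
    proof (rule Bochner_Integration.integrable_bound[OF Gi])
      show "(\<lambda>x. indicator (K r) x * (cmod (G x))\<^sup>2) \<in> borel_measurable M" by measurable
      show "AE x in M. norm (indicator (K r) x * (cmod (G x))\<^sup>2) \<le> norm ((cmod (G x))\<^sup>2)"
        by (rule AE_I2) (simp add: indicator_def)
    qed
  qed
  have "(\<Sum>r\<in>J. (cmod (LINT x|M. e r x * cnj (G x)))\<^sup>2) \<le> (\<Sum>r\<in>J. LINT x|M. indicator (K r) x * (cmod (G x))\<^sup>2)"
    by (rule sum_mono) (rule step)
  also have "\<dots> = (LINT x|M. (\<Sum>r\<in>J. indicator (K r) x * (cmod (G x))\<^sup>2))"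
    by (rule Bochner_Integration.integral_sum[symmetric]) (rule ints)
  also have "\<dots> \<le> (LINT x|M. (cmod (G x))\<^sup>2)"
  proof (rule integral_mono)
    show "integrable M (\<lambda>x. \<Sum>r\<in>J. indicator (K r) x * (cmod (G x))\<^sup>2)"
      using ints by (intro Bochner_Integration.integrable_sum) auto
    show "integrable M (\<lambda>x. (cmod (G x))\<^sup>2)" by (rule Gi)
    fix x
    have "(\<Sum>r\<in>J. indicator (K r) x :: real) = indicator (\<Union>r\<in>J. K r) x"
      using dj fin by (simp add: indicator_UN_disjoint) 
    also have "\<dots> \<le> 1" by (simp add: indicator_def)
    finally have "(\<Sum>r\<in>J. indicator (K r) x :: real) \<le> 1" .
    then have "(\<Sum>r\<in>J. indicator (K r) x) * (cmod (G x))\<^sup>2 \<le> 1 * (cmod (G x))\<^sup>2"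
      by (intro mult_right_mono) auto
    then show "(\<Sum>r\<in>J. indicator (K r) x * (cmod (G x))\<^sup>2) \<le> (cmod (G x))\<^sup>2"
      by (simp add: sum_distrib_right)
  qed
  finally show ?thesis .
qed

theorem theorem2:
  fixes p :: nat and H :: "(padic \<Rightarrow> complex) \<Rightarrow> (padic \<Rightarrow> complex)"
    and U :: "real \<Rightarrow> (padic \<Rightarrow> complex) \<Rightarrow> (padic \<Rightarrow> complex)"
    and N :: "padic set" and J :: "'j set" and K :: "'j \<Rightarrow> padic set"
    and c :: "'j \<Rightarrow> complex" and e :: "'j \<Rightarrow> padic \<Rightarrow> complex"
  assumes "prime p"
    and "unitary_group_of p H U"
    and "N \<subseteq> Zp p" and "N \<in> null_sets (haar p)"
    and "finite J"
    and "\<And>j. j \<in> J \<Longrightarrow> openin (Zp_top p) (K j) \<and> compactin (Zp_top p) (K j)"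
    and "disjoint_family_on K J"
    and "Zp p - N = (\<Union>j\<in>J. K j)"
    and "\<And>v. e v = (\<lambda>x. c v * indicator (K v) x)"
    and "\<And>v. v \<in> J \<Longrightarrow> l2_norm p (e v) = 1"
  shows "qmc_transition_matrix (insert None (Some ` J)) (pi_mat p U e J)"
proof -
  note A = assms
  define M where "M = haar p"
  have un: "unitary_L2 p (U t)" for t using A(2) unfolding unitary_group_of_def by blast
  have en: "(LINT x|haar p. (cmod (e v x))\<^sup>2) = 1" if v: "v \<in> J" for v
  proof -
    have "sqrt (LINT x|haar p. (cmod (e v x))\<^sup>2) = 1" using A(10)[OF v] by (simp add: l2_norm_def)
    then show ?thesis by simp
  qed
  have eL2: "e v \<in> L2 p" if v: "v \<in> J" for v
  proof -
    have n1: "(LINT x|haar p. (cmod (c v * indicator (K v) x))\<^sup>2) = 1" using en[OF v] A(9) by simp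
    note I = ind_set[OF n1]
    have Km[measurable]: "K v \<inter> space (haar p) \<in> sets (haar p)" by (rule I(1))
    have ind_m[measurable]: "(indicator (K v) :: _ \<Rightarrow> complex) \<in> borel_measurable (haar p)"
      using Km by (simp add: borel_measurable_indicator_iff)
    have "e v \<in> borel_measurable (haar p)" unfolding A(9)[of v] by measurable
    then show ?thesis unfolding L2_def using I(3) A(9)[of v] by simp
  qed
  have B: "(\<Sum>r\<in>J. (cmod (l2_inner p (e r) (U t (e v))))\<^sup>2) \<le> 1" if v: "v \<in> J" for t v
  proof -
    have GL2: "U t (e v) \<in> L2 p" using un[of t] eL2[OF v] unfolding unitary_L2_def by blast
    have "l2_inner p (U t (e v)) (U t (e v)) = l2_inner p (e v) (e v)"
      using un[of t] eL2[OF v] unfolding unitary_L2_def by blast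
    then have "complex_of_real (LINT x|haar p. (cmod (U t (e v) x))\<^sup>2) = complex_of_real 1"
      unfolding l2_inner_def inner_self_cmod en[OF v] .
    then have G1: "(LINT x|haar p. (cmod (U t (e v) x))\<^sup>2) = 1" by (simp only: of_real_eq_iff)
    have "(\<Sum>r\<in>J. (cmod (LINT x|haar p. e r x * cnj (U t (e v) x)))\<^sup>2) \<le> (LINT x|haar p. (cmod (U t (e v) x))\<^sup>2)"
      by (rule bessel[OF A(5) A(7) A(9) en]) (use GL2 in \<open>auto simp: L2_def\<close>)
    then show ?thesis unfolding l2_inner_def G1 .
  qed
  have nn: "0 \<le> (\<Sum>r\<in>J. (cmod (l2_inner p (e r) (U t (e v))))\<^sup>2)" for t v
    by (intro sum_nonneg) auto
  have le1: "(cmod (l2_inner p (e r) (U t (e v))))\<^sup>2 \<le> 1" if "r \<in> J" "v \<in> J" for r v t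
  proof -
    have "(cmod (l2_inner p (e r) (U t (e v))))\<^sup>2 \<le> (\<Sum>r\<in>J. (cmod (l2_inner p (e r) (U t (e v))))\<^sup>2)"
      by (rule member_le_sum) (use that A(5) in auto)
    then show ?thesis using B[OF that(2), of t] by linarith
  qed
  have part1: "0 \<le> pi_mat p U e J t s r \<and> pi_mat p U e J t s r \<le> 1"
    if "s \<in> insert None (Some ` J)" "r \<in> insert None (Some ` J)" for t s r
  proof (cases r)
    case None then show ?thesis by (cases s) (auto simp: pi_mat_def)
  next
    case (Some v)
    with that have v: "v \<in> J" by auto
    show ?thesis
    proof (cases s)
      case None then show ?thesis using Some B[OF v, of t] nn[of t v] by (auto simp: pi_mat_def)
    next
      case (Some r')
      with that have "r' \<in> J" by auto
      then show ?thesis using Some \<open>r = Some v\<close> le1[OF _ v, of r' t] by (auto simp: pi_mat_def)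
    qed
  qed
  have part2: "(\<Sum>s\<in>insert None (Some ` J). pi_mat p U e J t s r) = 1"
    if "r \<in> insert None (Some ` J)" for t r
  proof -
    have "(\<Sum>s\<in>insert None (Some ` J). pi_mat p U e J t s r)
        = pi_mat p U e J t None r + (\<Sum>s\<in>Some ` J. pi_mat p U e J t s r)"
      using A(5) by (subst sum.insert) auto
    also have "(\<Sum>s\<in>Some ` J. pi_mat p U e J t s r) = (\<Sum>j\<in>J. pi_mat p U e J t (Some j) r)"
      by (subst sum.reindex) auto
    finally show ?thesis by (cases r) (auto simp: pi_mat_def)
  qed
  show ?thesis unfolding qmc_transition_matrix_def using part1 part2 by blast
qed

end
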